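(* Let $H$ be obtained from a graph $G$ on vertices $v_1,\dots,v_k$ by expanding each $v_i$ by the graph $M_i=(V_i,E_i)$. Let $\Omega$ be a potential maximal clique of $H$, and suppose some $V_i$ intersects $\Omega$ but is not contained in $\Omega$. Then $\Omega\cap V_i$ is a potential maximal clique of $M_i$ and $\Omega\setminus V_i=N_H(V_i)$.
   Context: Expansion: given a graph $G$ on vertices $v_1,\dots,v_k$ and pairwise disjoint graphs $M_i=(V_i,E_i)$, the graph $H$ obtained by expanding each $v_i$ by $M_i$ has vertex set $V_1\cup\dots\cup V_k$ and edge set $E_1\cup\dots\cup E_k\cup\{ab \mid a\in V_i, b\in V_j, v_iv_j\in E(G)\}$. $N_H(X)$ denotes the set of vertices outside $X$ adjacent in $H$ to some vertex of $X$. A graph is chordal if every cycle of length at least 4 has a chord; a minimal triangulation of a graph $F$ is a chordal supergraph on the same vertex set such that no proper subset of its edge set containing $E(F)$ gives a chordal graph. A potential maximal clique of $F$ is a vertex set that is a maximal clique of some minimal triangulation of $F$. *)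

theory Defs
  imports Main
begin

definition graph :: "'a set \<Rightarrow> 'a set set \<Rightarrow> bool" where
  "graph V E \<longleftrightarrow> finite V \<and> (\<forall>e\<in>E. e \<subseteq> V \<and> card e = 2)"

definition chordal :: "'a set \<Rightarrow> 'a set set \<Rightarrow> bool" where
  "chordal V E \<longleftrightarrow>
    (\<forall>xs. distinct xs \<and> length xs \<ge> 4 \<and> set xs \<subseteq> V \<and>
          (\<forall>i < length xs. {xs ! i, xs ! ((i + 1) mod length xs)} \<in> E)
      \<longrightarrow> (\<exists>i < length xs. \<exists>j < length xs. i \<noteq> j \<and>
              j \<noteq> (i + 1) mod length xs \<and> i \<noteq> (j + 1) mod length xs \<and>
              {xs ! i, xs ! j} \<in> E))"

definition minimal_triangulation :: "'a set \<Rightarrow> 'a set set \<Rightarrow> 'a set set \<Rightarrow> bool" where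
  "minimal_triangulation V E F \<longleftrightarrow>
    graph V F \<and> E \<subseteq> F \<and> chordal V F \<and>
    (\<forall>F'. E \<subseteq> F' \<and> F' \<subset> F \<longrightarrow> \<not> chordal V F')"

definition clique :: "'a set \<Rightarrow> 'a set set \<Rightarrow> 'a set \<Rightarrow> bool" where
  "clique V E K \<longleftrightarrow> K \<subseteq> V \<and> (\<forall>x\<in>K. \<forall>y\<in>K. x \<noteq> y \<longrightarrow> {x, y} \<in> E)"

definition maximal_clique :: "'a set \<Rightarrow> 'a set set \<Rightarrow> 'a set \<Rightarrow> bool" where
  "maximal_clique V E K \<longleftrightarrow> clique V E K \<and> (\<forall>K'. clique V E K' \<and> K \<subseteq> K' \<longrightarrow> K' = K)"

definition potential_maximal_clique :: "'a set \<Rightarrow> 'a set set \<Rightarrow> 'a set \<Rightarrow> bool" where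
  "potential_maximal_clique V E \<Omega> \<longleftrightarrow>
    (\<exists>F. minimal_triangulation V E F \<and> maximal_clique V F \<Omega>)"

definition nbhd :: "'a set \<Rightarrow> 'a set set \<Rightarrow> 'a set \<Rightarrow> 'a set" where
  "nbhd V E X = {v \<in> V - X. \<exists>x\<in>X. {x, v} \<in> E}"

text \<open>Expansion of G = (I, EG) where vertex i is replaced by M_i = (Vs i, Es i).\<close>
definition expand_V :: "'i set \<Rightarrow> ('i \<Rightarrow> 'a set) \<Rightarrow> 'a set" where
  "expand_V I Vs = (\<Union>i\<in>I. Vs i)"

definition expand_E :: "'i set \<Rightarrow> 'i set set \<Rightarrow> ('i \<Rightarrow> 'a set) \<Rightarrow> ('i \<Rightarrow> 'a set set) \<Rightarrow> 'a set set" where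
  "expand_E I EG Vs Es = (\<Union>i\<in>I. Es i) \<union>
     {{a, b} | a b i j. i \<in> I \<and> j \<in> I \<and> a \<in> Vs i \<and> b \<in> Vs j \<and> {i, j} \<in> EG}"

end

theory Submission
  imports Defs
begin

definition hc :: "'a set set \<Rightarrow> 'a list \<Rightarrow> bool" where
  "hc F xs \<longleftrightarrow> (\<exists>i<length xs. \<exists>j<length xs. i \<noteq> j \<and>
              j \<noteq> (i + 1) mod length xs \<and> i \<noteq> (j + 1) mod length xs \<and>
              {xs ! i, xs ! j} \<in> F)"

definition cyc :: "'a set \<Rightarrow> 'a set set \<Rightarrow> 'a list \<Rightarrow> bool" where
  "cyc V F xs \<longleftrightarrow> distinct xs \<and> length xs \<ge> 4 \<and> set xs \<subseteq> V \<and>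
          (\<forall>i < length xs. {xs ! i, xs ! ((i + 1) mod length xs)} \<in> F)"

lemma chordal_iff: "chordal V F \<longleftrightarrow> (\<forall>xs. cyc V F xs \<longrightarrow> hc F xs)"
  by (auto simp: chordal_def cyc_def hc_def)

lemma mod_cancel_add: "(a + k) mod n = (b + k) mod (n::nat) \<Longrightarrow> a mod n = b mod n"
proof -
  assume h: "(a + k) mod n = (b + k) mod n"
  have "int ((a + k) mod n) = int ((b + k) mod n)" using h by simp
  hence "(int a + int k) mod int n = (int b + int k) mod int n" by (simp add: zmod_int)
  hence "((int a + int k) mod int n - int k) mod int n = ((int b + int k) mod int n - int k) mod int n" by simp
  hence "int a mod int n = int b mod int n" by (simp add: mod_diff_left_eq)
  thus ?thesis by (metis of_nat_eq_iff zmod_int)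
qed

lemma cyc_rotate:
  assumes "cyc V F xs" shows "cyc V F (rotate k xs)"
proof -
  let ?n = "length xs"
  have n: "?n \<ge> 4" using assms by (simp add: cyc_def)
  have "{rotate k xs ! i, rotate k xs ! ((i + 1) mod ?n)} \<in> F" if "i < ?n" for i
  proof -
    have "rotate k xs ! i = xs ! ((i + k) mod ?n)" using that by (simp add: nth_rotate add.commute)
    moreover have "rotate k xs ! ((i + 1) mod ?n) = xs ! ((((i + k) mod ?n) + 1) mod ?n)"
    proof -
      have "rotate k xs ! ((i + 1) mod ?n) = xs ! (((i + 1) mod ?n + k) mod ?n)"
      proof -
        have "?n > 0" using n by linarith
        hence "(i+1) mod ?n < ?n" by (rule mod_less_divisor)
        thus ?thesis using nth_rotate[of "(i+1) mod ?n" xs k] by (simp add: add.commute)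
      qed
      moreover have "((i + 1) mod ?n + k) mod ?n = (i + 1 + k) mod ?n" by (simp add: mod_add_left_eq)
      moreover have "(((i + k) mod ?n) + 1) mod ?n = (i + k + 1) mod ?n" by (simp add: mod_Suc_eq)
      ultimately show ?thesis by (simp add: ac_simps)
    qed
    moreover have "(i + k) mod ?n < ?n" using n by (intro mod_less_divisor) linarith
    ultimately show ?thesis using assms unfolding cyc_def by metis
  qed
  then show ?thesis using assms by (simp add: cyc_def)
qed

lemma hc_rotate:
  assumes "hc F (rotate k xs)" shows "hc F xs"
proof -
  let ?n = "length xs"
  obtain i j where ij: "i < ?n" "j < ?n" "i \<noteq> j" "j \<noteq> (i + 1) mod ?n" "i \<noteq> (j + 1) mod ?n"
     "{rotate k xs ! i, rotate k xs ! j} \<in> F" using assms by (auto simp: hc_def)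
  have n: "?n > 0" using ij(1) by linarith
  define i' where "i' = (i + k) mod ?n"
  define j' where "j' = (j + k) mod ?n"
  have e: "{xs ! i', xs ! j'} \<in> F" using ij by (simp add: nth_rotate i'_def j'_def add.commute)
  have "i' \<noteq> j'" using ij mod_cancel_add[of i k ?n j] by (auto simp: i'_def j'_def)
  moreover have "j' \<noteq> (i' + 1) mod ?n"
  proof
    assume "j' = (i' + 1) mod ?n"
    hence "(j + k) mod ?n = ((i + 1) + k) mod ?n" unfolding i'_def j'_def
      by (simp add: mod_add_left_eq add.commute add.left_commute mod_Suc_eq)
    hence "j mod ?n = (i+1) mod ?n" by (rule mod_cancel_add)
    thus False using ij by simp
  qed
  moreover have "i' \<noteq> (j' + 1) mod ?n"
  proof
    assume "i' = (j' + 1) mod ?n"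
    hence "(i + k) mod ?n = ((j + 1) + k) mod ?n" unfolding i'_def j'_def
      by (simp add: mod_add_left_eq add.commute add.left_commute mod_Suc_eq)
    hence "i mod ?n = (j+1) mod ?n" by (rule mod_cancel_add)
    thus False using ij by simp
  qed
  moreover have "i' < ?n" "j' < ?n" using n by (auto simp: i'_def j'_def)
  ultimately show ?thesis using e unfolding hc_def by blast
qed

lemma chordless_not_chordal:
  assumes d: "distinct (v#qs)" and l: "length qs \<ge> 3" and s: "set (v#qs) \<subseteq> V"
    and P: "\<forall>a<length qs. \<forall>b<length qs. {qs!a, qs!b} \<in> F \<longleftrightarrow> (a = Suc b \<or> b = Suc a)"
    and Q: "\<forall>a<length qs. {v, qs!a} \<in> F \<longleftrightarrow> (a = 0 \<or> a = length qs - 1)"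
  shows "\<not> chordal V F"
proof
  assume ch: "chordal V F"
  let ?xs = "v#qs"
  let ?n = "length ?xs"
  have ne: "qs \<noteq> []" using l by auto
  have nth0: "?xs ! i = (if i = 0 then v else qs ! (i - 1))" for i by (simp add: nth_Cons')
  have "{?xs ! i, ?xs ! ((i + 1) mod ?n)} \<in> F" if i: "i < ?n" for i
  proof (cases "i = 0")
    case True
    then show ?thesis using Q l ne by (simp add: nth0)
  next
    case False
    show ?thesis
    proof (cases "i = ?n - 1")
      case True
      hence "(i+1) mod ?n = 0" by simp
      then show ?thesis using Q l True False by (simp add: nth0 insert_commute)
    next
      case False2: False
      hence "(i+1) mod ?n = i + 1" using i by simp
      then show ?thesis using P l False False2 i by (simp add: nth0)
    qed
  qed
  hence cy: "cyc V F ?xs" using d l s by (simp add: cyc_def)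
  have "\<not> hc F ?xs"
  proof
    assume "hc F ?xs"
    then obtain i j where ij: "i < ?n" "j < ?n" "i \<noteq> j" "j \<noteq> (i + 1) mod ?n"
      "i \<noteq> (j + 1) mod ?n" "{?xs!i, ?xs!j} \<in> F" unfolding hc_def by blast
    show False
    proof (cases "i = 0")
      case True
      hence "j \<noteq> 0" "j \<noteq> 1" "j \<noteq> ?n - 1" using ij l by (auto simp: mod_Suc)
      thus False using Q ij True by (simp add: nth0)
    next
      case F1: False
      show False
      proof (cases "j = 0")
        case True
        hence "i \<noteq> 1" "i \<noteq> ?n - 1" using ij l F1 by (auto simp: mod_Suc)
        thus False using Q ij True F1 by (simp add: nth0 insert_commute)
      next
        case False
        have "i - 1 \<noteq> Suc (j - 1)" "j - 1 \<noteq> Suc (i - 1)" using ij F1 False l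
          by (auto simp: mod_Suc split: if_splits)
        thus False using P ij F1 False by (simp add: nth0)
      qed
    qed
  qed
  thus False using ch cy by (simp add: chordal_iff)
qed

lemma path_lemma:
  assumes ch: "chordal V F" and d: "distinct ps" and sV: "set ps \<subseteq> V" and l2: "length ps \<ge> 2"
   and P: "\<forall>a<length ps. \<forall>b<length ps. {ps!a,ps!b}\<in>F \<longleftrightarrow> (a = Suc b \<or> b = Suc a)"
   and v: "v \<in> V" "v \<notin> set ps" "{v, ps!0}\<in>F" "{v, ps!(length ps - 1)} \<in> F"
  shows "\<forall>j<length ps. {v, ps!j} \<in> F"
proof (rule ccontr)
  assume "\<not> ?thesis"
  then obtain j where j: "j < length ps" "{v, ps!j} \<notin> F" by blast
  define A where "A = {l. l < length ps \<and> {v, ps!l} \<in> F}"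
  have fA: "finite A" unfolding A_def by simp
  have A0: "0 \<in> A" "length ps - 1 \<in> A" using v l2 by (auto simp: A_def)
  define a where "a = Max {l\<in>A. l \<le> j}"
  define b where "b = Min {l\<in>A. j \<le> l}"
  have f1: "finite {l\<in>A. l \<le> j}" "{l\<in>A. l \<le> j} \<noteq> {}" using fA A0 by auto
  have f2: "finite {l\<in>A. j \<le> l}" "{l\<in>A. j \<le> l} \<noteq> {}" using fA A0 j by auto
  have aA: "a \<in> A" "a \<le> j" using Max_in[OF f1] unfolding a_def by auto
  have bA: "b \<in> A" "j \<le> b" using Min_in[OF f2] unfolding b_def by auto
  have jA: "j \<notin> A" using j by (auto simp: A_def)
  have ab: "a < j" "j < b" using aA bA jA by (auto simp: le_less)
  have blen: "b < length ps" using bA by (auto simp: A_def)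
  have mid: "l \<notin> A" if "a < l" "l < b" for l
  proof
    assume lA: "l \<in> A"
    show False
    proof (cases "l \<le> j")
      case True
      hence "l \<le> a" unfolding a_def using f1 lA by (intro Max_ge) auto
      thus False using that by simp
    next
      case False
      hence "b \<le> l" unfolding b_def using f2 lA by (intro Min_le) auto
      thus False using that by simp
    qed
  qed
  define qs where "qs = take (b - a + 1) (drop a ps)"
  have lq: "length qs = b - a + 1" using blen ab by (simp add: qs_def)
  have qn: "qs ! c = ps ! (a + c)" if "c < length qs" for c
    using that blen ab by (simp add: qs_def lq)
  have "\<not> chordal V F"
  proof (rule chordless_not_chordal[of v qs])
    show "distinct (v # qs)" using d v(2) by (auto simp: qs_def dest: in_set_takeD in_set_dropD intro: distinct_take distinct_drop)
    show "3 \<le> length qs" using lq ab by simp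
    show "set (v # qs) \<subseteq> V" using sV v(1) by (auto simp: qs_def dest: in_set_takeD in_set_dropD)
    show "\<forall>x<length qs. \<forall>y<length qs. ({qs ! x, qs ! y} \<in> F) = (x = Suc y \<or> y = Suc x)"
    proof (intro allI impI)
      fix x y assume xy: "x < length qs" "y < length qs"
      hence "a + x < length ps" "a + y < length ps" using lq blen ab by auto
      thus "({qs ! x, qs ! y} \<in> F) = (x = Suc y \<or> y = Suc x)" using P xy qn by auto
    qed
    show "\<forall>x<length qs. ({v, qs ! x} \<in> F) = (x = 0 \<or> x = length qs - 1)"
    proof (intro allI impI)
      fix x assume x: "x < length qs"
      show "({v, qs ! x} \<in> F) = (x = 0 \<or> x = length qs - 1)"
      proof (cases "x = 0 \<or> x = length qs - 1")
        case True
        then show ?thesis using aA bA lq qn x by (auto simp: A_def)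
      next
        case False
        hence "a < a + x" "a + x < b" using lq x by auto
        hence "a + x \<notin> A" by (rule mid)
        then show ?thesis using False qn x lq blen by (auto simp: A_def)
      qed
    qed
  qed
  thus False using ch by simp
qed

lemma hc_mono: "hc F xs \<Longrightarrow> F \<subseteq> G \<Longrightarrow> hc G xs"
  unfolding hc_def by blast

lemma hc_02: "length xs \<ge> 4 \<Longrightarrow> {xs!0, xs!2} \<in> F \<Longrightarrow> hc F xs"
proof -
  assume a: "length xs \<ge> 4" "{xs!0, xs!2} \<in> F"
  have "(0::nat) < length xs" "(2::nat) < length xs" "(0::nat) \<noteq> 2" "2 \<noteq> (0 + 1) mod length xs"
    "0 \<noteq> (2 + 1) mod length xs" using a by auto
  thus ?thesis using a(2) unfolding hc_def by blast
qed

lemma hc_1l: "length xs \<ge> 4 \<Longrightarrow> {xs!(length xs - 1), xs!1} \<in> F \<Longrightarrow> hc F xs"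
proof -
  assume a: "length xs \<ge> 4" "{xs!(length xs - 1), xs!1} \<in> F"
  have h1: "length xs - 1 < length xs" "(1::nat) < length xs" "length xs - 1 \<noteq> 1" 
    "length xs - 1 \<noteq> (1 + 1) mod length xs" using a by (auto simp del: One_nat_def)
  have "length xs - 1 + 1 = length xs" using a by linarith
  hence "(length xs - 1 + 1) mod length xs = 0" by simp
  hence "1 \<noteq> (length xs - 1 + 1) mod length xs" by simp
  thus ?thesis using a(2) h1 unfolding hc_def by blast
qed

lemma transition:
  assumes "xs!p \<in> M" "xs!q \<notin> M" "p < length xs" "q < length xs"
  shows "\<exists>i<length xs. xs!i \<in> M \<and> xs!((i+1) mod length xs) \<notin> M"
proof (rule ccontr)
  let ?n = "length xs"
  assume "\<not> ?thesis"
  hence st: "\<And>i. i < ?n \<Longrightarrow> xs!i \<in> M \<Longrightarrow> xs!((i+1) mod ?n) \<in> M" by blast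
  have n: "?n > 0" using assms by auto
  have "xs!((p+k) mod ?n) \<in> M" for k
  proof (induction k)
    case 0 then show ?case using assms by simp
  next
    case (Suc k)
    have "xs!(((p+k) mod ?n + 1) mod ?n) \<in> M" using st[OF _ Suc] n by simp
    moreover have "((p+k) mod ?n + 1) mod ?n = (p + Suc k) mod ?n" by (simp add: mod_Suc_eq)
    ultimately show ?case by simp
  qed
  from this[of "q + ?n - p"] have "xs!((q + ?n) mod ?n) \<in> M" using assms by simp
  thus False using assms by simp
qed

lemma rot_front:
  assumes "cyc V F xs" "\<not> hc F xs" "i < length xs"
  shows "\<exists>ys. cyc V F ys \<and> \<not> hc F ys \<and> set ys = set xs \<and> length ys = length xs \<and>
     ys!0 = xs!i \<and> ys!1 = xs!((i+1) mod length xs)"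
proof (intro exI[of _ "rotate i xs"] conjI)
  have n: "length xs \<ge> 4" using assms by (simp add: cyc_def)
  show "cyc V F (rotate i xs)" using assms cyc_rotate by blast
  show "\<not> hc F (rotate i xs)" using assms hc_rotate by blast
  show "set (rotate i xs) = set xs" by simp
  show "length (rotate i xs) = length xs" by simp
  have n0: "0 < length xs" using n by linarith
  show "rotate i xs ! 0 = xs ! i" using n0 assms(3) nth_rotate[of 0 xs i] by simp
  have n1: "1 < length xs" using n by linarith
  show "rotate i xs ! 1 = xs ! ((i + 1) mod length xs)" using n1 nth_rotate[of 1 xs i] by (simp add: add.commute)
qed

lemma chordal_induced:
  assumes "chordal V F" "W \<subseteq> V" shows "chordal W {e\<in>F. e \<subseteq> W}"
  unfolding chordal_iff
proof (intro allI impI)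
  fix xs assume c: "cyc W {e \<in> F. e \<subseteq> W} xs"
  hence "cyc V F xs" using assms by (auto simp: cyc_def)
  hence "hc F xs" using assms by (simp add: chordal_iff)
  then obtain i j where "i < length xs" "j < length xs" "i \<noteq> j" "j \<noteq> (i + 1) mod length xs"
    "i \<noteq> (j + 1) mod length xs" "{xs!i, xs!j} \<in> F" unfolding hc_def by blast
  moreover have "{xs!i, xs!j} \<subseteq> W" using c calculation(1,2) by (auto simp: cyc_def)
  ultimately show "hc {e \<in> F. e \<subseteq> W} xs" unfolding hc_def by blast
qed

lemma cyc_edge0: assumes "cyc V F ys" shows "{ys!0, ys!1} \<in> F"
proof -
  have n: "length ys \<ge> 4" and e: "\<forall>i<length ys. {ys!i, ys!((i+1) mod length ys)} \<in> F"
    using assms by (auto simp: cyc_def)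
  have "(0+1) mod length ys = 1" using n by simp
  moreover have "0 < length ys" using n by linarith
  ultimately show ?thesis using e by metis
qed

lemma cyc_edgeL: assumes "cyc V F ys" shows "{ys!(length ys - 1), ys!0} \<in> F"
proof -
  have n: "length ys \<ge> 4" and e: "\<forall>i<length ys. {ys!i, ys!((i+1) mod length ys)} \<in> F"
    using assms by (auto simp: cyc_def)
  have "length ys - 1 + 1 = length ys" using n by linarith
  hence "(length ys - 1 + 1) mod length ys = 0" by simp
  moreover have "length ys - 1 < length ys" using n by linarith
  ultimately show ?thesis using e by metis
qed

definition glue :: "'a set set \<Rightarrow> 'a set set \<Rightarrow> 'a set \<Rightarrow> 'a set \<Rightarrow> 'a set set" where
  "glue A B M N = A \<union> B \<union> {{m,n}| m n. m \<in> M \<and> n \<in> N}"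

lemma glue_A: "A \<subseteq> glue A B M N" unfolding glue_def by blast
lemma glue_B: "B \<subseteq> glue A B M N" unfolding glue_def by blast
lemma glue_MN: "m \<in> M \<Longrightarrow> n \<in> N \<Longrightarrow> {m,n} \<in> glue A B M N" unfolding glue_def by blast

lemma clsA: "{x,y} \<in> glue A B M N \<Longrightarrow> x \<in> X \<Longrightarrow> y \<in> X \<Longrightarrow> X \<inter> M = {}
  \<Longrightarrow> \<forall>e\<in>B. e \<subseteq> M \<Longrightarrow> {x,y} \<in> A"
  unfolding glue_def by (auto simp: doubleton_eq_iff) (metis disjoint_iff insert_subset)
lemma clsB: "{x,y} \<in> glue A B M N \<Longrightarrow> x \<in> M \<Longrightarrow> y \<in> M \<Longrightarrow> X \<inter> M = {}
  \<Longrightarrow> \<forall>e\<in>A. e \<subseteq> X \<Longrightarrow> N \<subseteq> X \<Longrightarrow> {x,y} \<in> B"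
  unfolding glue_def by (auto simp: doubleton_eq_iff) (metis disjoint_iff insert_subset)
lemma clsN: "{x,y} \<in> glue A B M N \<Longrightarrow> x \<in> M \<Longrightarrow> y \<notin> M \<Longrightarrow> X \<inter> M = {}
  \<Longrightarrow> \<forall>e\<in>A. e \<subseteq> X \<Longrightarrow> \<forall>e\<in>B. e \<subseteq> M \<Longrightarrow> y \<in> N"
  unfolding glue_def by (auto simp: doubleton_eq_iff) (metis disjoint_iff insert_subset)

lemma glue_nc:
  assumes chA: "chordal X A" and chB: "chordal M B" and disj: "X \<inter> M = {}"
   and Ae: "\<forall>e\<in>A. e \<subseteq> X" and Be: "\<forall>e\<in>B. e \<subseteq> M" and NX: "N \<subseteq> X"
   and Ncl: "\<forall>x\<in>N. \<forall>y\<in>N. x \<noteq> y \<longrightarrow> {x,y} \<in> A"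
  shows "chordal (X \<union> M) (glue A B M N)"
  unfolding chordal_iff
proof (intro allI impI)
  fix xs assume c: "cyc (X \<union> M) (glue A B M N) xs"
  show "hc (glue A B M N) xs"
  proof (rule ccontr)
    assume nh: "\<not> hc (glue A B M N) xs"
    have cls: "y \<in> N" if xy: "{x,y} \<in> glue A B M N" "x \<in> M" "y \<notin> M" for x y
      using clsN[OF xy disj Ae Be] .
    show False
    proof (cases "set xs \<subseteq> X")
      case True
      have "cyc X A xs"
      proof -
        have "{xs!i, xs!((i+1) mod length xs)} \<in> A" if "i < length xs" for i
        proof -
          have "{xs!i, xs!((i+1) mod length xs)} \<in> glue A B M N" using c that by (auto simp: cyc_def)
          moreover have "xs!i \<in> X" "xs!((i+1) mod length xs) \<in> X"
          proof -
            have "(i+1) mod length xs < length xs" using that by (intro mod_less_divisor) linarith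
            thus "xs!((i+1) mod length xs) \<in> X" using True nth_mem by blast
            show "xs!i \<in> X" using True that nth_mem by blast
          qed
          ultimately show ?thesis using disj Be by (rule clsA)
        qed
        thus ?thesis using c True by (auto simp: cyc_def)
      qed
      hence "hc A xs" using chA by (simp add: chordal_iff)
      hence "hc (glue A B M N) xs" using glue_A by (rule hc_mono)
      thus False using nh by contradiction
    next
      case nX: False
      show False
      proof (cases "set xs \<subseteq> M")
        case True
        have "cyc M B xs"
        proof -
          have "{xs!i, xs!((i+1) mod length xs)} \<in> B" if "i < length xs" for i
          proof -
            have "{xs!i, xs!((i+1) mod length xs)} \<in> glue A B M N" using c that by (auto simp: cyc_def)
            moreover have "xs!i \<in> M" "xs!((i+1) mod length xs) \<in> M"
            proof -
              have "(i+1) mod length xs < length xs" using that by (intro mod_less_divisor) linarith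
              thus "xs!((i+1) mod length xs) \<in> M" using True nth_mem by blast
              show "xs!i \<in> M" using True that nth_mem by blast
            qed
            ultimately show ?thesis using disj Ae NX by (rule clsB)
          qed
          thus ?thesis using c True by (auto simp: cyc_def)
        qed
        hence "hc B xs" using chB by (simp add: chordal_iff)
        hence "hc (glue A B M N) xs" using glue_B by (rule hc_mono)
        thus False using nh by contradiction
      next
        case False
        obtain x where x: "x \<in> set xs" "x \<notin> X" using nX by blast
        have "x \<in> M" using x c unfolding cyc_def by blast
        then obtain p where p: "p < length xs" "xs!p \<in> M" using x(1) by (metis in_set_conv_nth)
        obtain x' where x': "x' \<in> set xs" "x' \<notin> M" using False by blast
        then obtain q where q: "q < length xs" "xs!q \<notin> M" by (metis in_set_conv_nth)
        obtain i where i: "i < length xs" "xs!i \<in> M" "xs!((i+1) mod length xs) \<notin> M"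
          using transition[OF p(2) q(2) p(1) q(1)] by blast
        obtain ys where ys: "cyc (X \<union> M) (glue A B M N) ys" "\<not> hc (glue A B M N) ys" "set ys = set xs" "length ys = length xs"
          "ys!0 = xs!i" "ys!1 = xs!((i+1) mod length xs)" using rot_front[OF c nh i(1)] by blast
        let ?n = "length ys"
        have n: "?n \<ge> 4" using ys(1) by (simp add: cyc_def)
        have d: "distinct ys" using ys(1) by (simp add: cyc_def)
        have y1: "ys!1 \<in> N" using cls[OF cyc_edge0[OF ys(1)]] ys(5,6) i(2,3) by simp
        have eL: "{ys!(?n - 1), ys!0} \<in> glue A B M N" using cyc_edgeL[OF ys(1)] .
        have neq: "ys!(?n - 1) \<noteq> ys!1" using d n by (simp add: nth_eq_iff_index_eq)
        show False
        proof (cases "ys!(?n - 1) \<in> M")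
          case True
          hence "{ys!(?n - 1), ys!1} \<in> glue A B M N" using y1 by (rule glue_MN)
          thus False using hc_1l[OF n] ys(2) by blast
        next
          case False
          have "{ys!0, ys!(?n - 1)} \<in> glue A B M N" using eL by (simp only: insert_commute)
          moreover have "ys!0 \<in> M" using ys(5) i(2) by simp
          ultimately have "ys!(?n - 1) \<in> N" using False by (rule cls)
          hence "{ys!(?n - 1), ys!1} \<in> A" using Ncl y1 neq by blast
          hence "{ys!(?n - 1), ys!1} \<in> glue A B M N" using glue_A by blast
          thus False using hc_1l[OF n] ys(2) by blast
        qed
      qed
    qed
  qed
qed

lemma hc_intro: "i < length xs \<Longrightarrow> j < length xs \<Longrightarrow> i \<noteq> j \<Longrightarrow> j \<noteq> (i + 1) mod length xs \<Longrightarrow>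
   i \<noteq> (j + 1) mod length xs \<Longrightarrow> {xs!i, xs!j} \<in> F \<Longrightarrow> hc F xs"
  unfolding hc_def by blast

lemma cyc_edge: "cyc V F xs \<Longrightarrow> i < length xs \<Longrightarrow> {xs!i, xs!((i+1) mod length xs)} \<in> F"
  unfolding cyc_def by blast

lemma cyc_mono: "cyc V F xs \<Longrightarrow> F \<subseteq> G \<Longrightarrow> cyc V G xs"
  unfolding cyc_def by blast

lemma glue_c:
  assumes ch: "chordal V F" and g: "\<forall>e\<in>F. card e = 2" and MV: "M \<subseteq> V"
   and Mcl: "\<forall>x\<in>M. \<forall>y\<in>M. x\<noteq>y \<longrightarrow> {x,y}\<in>F"
   and T: "T = {x\<in>V-M. \<forall>m\<in>M. {m,x}\<in>F}"
  shows "chordal V (glue {e\<in>F. e \<subseteq> V-M} {e\<in>F. e\<subseteq>M} M T)"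
  unfolding chordal_iff
proof (intro allI impI)
  let ?A = "{e\<in>F. e \<subseteq> V-M}" and ?B = "{e\<in>F. e\<subseteq>M}"
  let ?G = "glue ?A ?B M T"
  have GF: "?G \<subseteq> F" using T unfolding glue_def by auto
  have disj: "(V - M) \<inter> M = {}" by blast
  have Ae: "\<forall>e\<in>?A. e \<subseteq> V - M" and Be: "\<forall>e\<in>?B. e \<subseteq> M" by auto
  fix xs assume c: "cyc V ?G xs"
  show "hc ?G xs"
  proof (rule ccontr)
    assume nh: "\<not> hc ?G xs"
    show False
    proof (cases "set xs \<subseteq> V - M")
      case True
      have "cyc V F xs" using c GF by (rule cyc_mono)
      hence "hc F xs" using ch by (simp add: chordal_iff)
      then obtain i j where ij: "i < length xs" "j < length xs" "i \<noteq> j" "j \<noteq> (i + 1) mod length xs"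
        "i \<noteq> (j + 1) mod length xs" "{xs!i, xs!j} \<in> F" unfolding hc_def by blast
      have "xs!i \<in> V - M" "xs!j \<in> V - M" using True ij(1,2) nth_mem by blast+
      hence "{xs!i, xs!j} \<in> ?A" using ij(6) by simp
      hence "{xs!i, xs!j} \<in> ?G" by (rule subsetD[OF glue_A])
      hence "hc ?G xs" using ij by (intro hc_intro[of i xs j])
      thus False using nh by contradiction
    next
      case nX: False
      have n4: "length xs \<ge> 4" and dx: "distinct xs" using c by (auto simp: cyc_def)
      show False
      proof (cases "set xs \<subseteq> M")
        case True
        have "0 < length xs" "2 < length xs" using n4 by linarith+
        hence "xs!0 \<in> M" "xs!2 \<in> M" using True nth_mem by blast+
        moreover have "xs!0 \<noteq> xs!2" using nth_eq_iff_index_eq[OF dx, of 0 2] \<open>0 < length xs\<close> \<open>2 < length xs\<close> by simp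
        ultimately have "{xs!0, xs!2} \<in> ?B" using Mcl by simp
        hence "{xs!0, xs!2} \<in> ?G" by (rule subsetD[OF glue_B])
        from hc_02[OF n4 this] nh show False by contradiction
      next
        case False
        obtain x where x: "x \<in> set xs" "x \<notin> V - M" using nX by blast
        have "x \<in> M" using x c unfolding cyc_def by blast
        then obtain p where p: "p < length xs" "xs!p \<in> M" using x(1) by (metis in_set_conv_nth)
        obtain x' where x': "x' \<in> set xs" "x' \<notin> M" using False by blast
        then obtain q where q: "q < length xs" "xs!q \<notin> M" by (metis in_set_conv_nth)
        obtain i where i: "i < length xs" "xs!i \<in> M" "xs!((i+1) mod length xs) \<notin> M"
          using transition[OF p(2) q(2) p(1) q(1)] by blast
        obtain ys where ys: "cyc V ?G ys" "\<not> hc ?G ys" "set ys = set xs" "length ys = length xs"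
          "ys!0 = xs!i" "ys!1 = xs!((i+1) mod length xs)" using rot_front[OF c nh i(1)] by blast
        let ?n = "length ys"
        have n: "?n \<ge> 4" using ys(1) by (simp add: cyc_def)
        have d: "distinct ys" using ys(1) by (simp add: cyc_def)
        have yV: "ys!k \<in> V" if "k < ?n" for k using ys(1) that nth_mem unfolding cyc_def by blast
        have y0: "ys!0 \<in> M" using ys(5) i(2) by simp
        have y1M: "ys!1 \<notin> M" using ys(6) i(3) by simp
        have y1: "ys!1 \<in> T" using clsN[OF cyc_edge0[OF ys(1)] y0 y1M disj Ae Be] .
        have eL: "{ys!0, ys!(?n - 1)} \<in> ?G" using cyc_edgeL[OF ys(1)] by (simp only: insert_commute)
        have uM: "ys!(?n - 1) \<notin> M"
        proof
          assume "ys!(?n - 1) \<in> M"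
          hence "{ys!(?n - 1), ys!1} \<in> ?G" using y1 by (rule glue_MN)
          from hc_1l[OF n this] ys(2) show False by contradiction
        qed
        have u: "ys!(?n - 1) \<in> T" using clsN[OF eL y0 uM disj Ae Be] .
        have notM: "ys!k \<notin> M" if k: "1 \<le> k" "k < ?n" for k
        proof
          assume kM: "ys!k \<in> M"
          have k1: "k \<noteq> 1" "k \<noteq> ?n - 1" using kM y1M uM by auto
          have e1: "{ys!k, ys!1} \<in> ?G" using kM y1 by (rule glue_MN)
          have e2: "{ys!k, ys!(?n - 1)} \<in> ?G" using kM u by (rule glue_MN)
          have k2: "k = 2"
          proof (rule ccontr)
            assume "k \<noteq> 2"
            moreover have "(k + 1) mod ?n = k + 1" using k k1 by simp
            moreover have "(1 + 1) mod ?n = 2" using n by simp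
            ultimately have "hc ?G ys" using k k1 e1 n by (intro hc_intro[of k ys 1]) auto
            thus False using ys(2) by contradiction
          qed
          have kn: "k = ?n - 2"
          proof (rule ccontr)
            assume "k \<noteq> ?n - 2"
            moreover have "(k + 1) mod ?n = k + 1" using k k1 by simp
            moreover have "?n - 1 + 1 = ?n" using n by linarith
            hence "(?n - 1 + 1) mod ?n = 0" by simp
            ultimately have "hc ?G ys" using k k1 e2 n by (intro hc_intro[of k ys "?n - 1"]) auto
            thus False using ys(2) by contradiction
          qed
          have "0 < ?n" "2 < ?n" using n by linarith+
          hence "ys!0 \<noteq> ys!2" using nth_eq_iff_index_eq[OF d, of 0 2] by simp
          hence "{ys!0, ys!2} \<in> ?B" using Mcl y0 kM k2 by simp
          hence "{ys!0, ys!2} \<in> ?G" by (rule subsetD[OF glue_B])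
          from hc_02[OF n this] ys(2) show False by contradiction
        qed
        define ps where "ps = tl ys"
        have lps: "length ps = ?n - 1" by (simp add: ps_def)
        have psn: "ps!a = ys!(Suc a)" if "a < length ps" for a using that by (simp add: ps_def nth_tl)
        have ind: "\<forall>a<length ps. \<forall>b<length ps. {ps!a,ps!b}\<in>F \<longleftrightarrow> (a = Suc b \<or> b = Suc a)"
        proof (intro allI impI)
          fix a b assume ab: "a < length ps" "b < length ps"
          have cons: "{ys!(Suc a), ys!(Suc (Suc a))} \<in> F" if "Suc a < length ps" for a
          proof -
            have md: "(Suc a + 1) mod ?n = Suc (Suc a)" using that lps by simp
            have "Suc a < ?n" using that lps by simp
            from cyc_edge[OF ys(1) this] have "{ys!(Suc a), ys!(Suc (Suc a))} \<in> ?G" by (simp only: md)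
            thus ?thesis by (rule subsetD[OF GF])
          qed
          show "{ps!a,ps!b}\<in>F \<longleftrightarrow> (a = Suc b \<or> b = Suc a)"
          proof
            assume "a = Suc b \<or> b = Suc a"
            thus "{ps!a,ps!b}\<in>F" using cons ab psn by (auto simp: insert_commute)
          next
            assume e: "{ps!a,ps!b}\<in>F"
            show "a = Suc b \<or> b = Suc a"
            proof (rule ccontr)
              assume nc: "\<not> (a = Suc b \<or> b = Suc a)"
              have ab': "a \<noteq> b"
              proof
                assume "a = b"
                hence "card {ps!a, ps!b} = 1" by simp
                thus False using e g by fastforce
              qed
              have inV: "ys!(Suc a) \<in> V - M" "ys!(Suc b) \<in> V - M" using notM yV ab lps by auto
              have "{ys!(Suc a), ys!(Suc b)} \<in> ?A" using e inV ab psn by simp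
              hence eG: "{ys!(Suc a), ys!(Suc b)} \<in> ?G" by (rule subsetD[OF glue_A])
              have m1: "Suc b \<noteq> (Suc a + 1) mod ?n"
              proof (cases "Suc a + 1 < ?n")
                case True thus ?thesis using nc by simp
              next
                case False hence "Suc a + 1 = ?n" using ab lps by simp
                thus ?thesis by simp
              qed
              have m2: "Suc a \<noteq> (Suc b + 1) mod ?n"
              proof (cases "Suc b + 1 < ?n")
                case True thus ?thesis using nc by simp
              next
                case False hence "Suc b + 1 = ?n" using ab lps by simp
                thus ?thesis by simp
              qed
              have "hc ?G ys" using ab lps ab' m1 m2 eG by (intro hc_intro[of "Suc a" ys "Suc b"]) auto
              thus False using ys(2) by contradiction
            qed
          qed
        qed
        have all: "\<forall>j<length ps. {m', ps!j} \<in> F" if m': "m' \<in> M" for m'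
        proof (rule path_lemma[OF ch])
          show "distinct ps" using d by (simp add: ps_def distinct_tl)
          show "set ps \<subseteq> V" using ys(1) list.set_sel(2)[of ys] unfolding ps_def cyc_def by (cases ys) auto
          show "2 \<le> length ps" using lps n by simp
          show "\<forall>a<length ps. \<forall>b<length ps. ({ps ! a, ps ! b} \<in> F) = (a = Suc b \<or> b = Suc a)" by (rule ind)
          show "m' \<in> V" using m' MV by blast
          show "m' \<notin> set ps"
          proof
            assume "m' \<in> set ps"
            then obtain a where "a < length ps" "ps!a = m'" by (metis in_set_conv_nth)
            hence a: "a < length ps" "ps!a = m'" .
            hence "Suc a < ?n" using lps by arith
            hence "ys!(Suc a) \<notin> M" using notM[of "Suc a"] by simp
            thus False using psn[OF a(1)] a(2) m' by simp
          qed
          show "{m', ps ! 0} \<in> F" using y1 T m' psn[of 0] lps n by auto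
          have "Suc (length ps - 1) = ?n - 1" "length ps - 1 < length ps" using lps n by arith+
          thus "{m', ps ! (length ps - 1)} \<in> F" using u T m' psn[of "length ps - 1"] by simp
        qed
        have "ys!2 \<in> T"
        proof -
          have "ys!2 \<in> V - M" using notM[of 2] yV[of 2] n by auto
          moreover have "{m', ys!2} \<in> F" if "m' \<in> M" for m'
          proof -
            have "1 < length ps" using lps n by arith
            moreover have "ys!(Suc 1) = ys!2" by (simp add: numeral_2_eq_2)
            ultimately show ?thesis using all[OF that] psn[of 1] by metis
          qed
          ultimately show ?thesis using T by auto
        qed
        hence "{ys!0, ys!2} \<in> ?G" using y0 by (intro glue_MN)
        from hc_02[OF n this] ys(2) show False by contradiction
      qed
    qed
  qed
qed

lemma hc4: "hc F [a,b,c,d] \<Longrightarrow> {a,c} \<in> F \<or> {b,d} \<in> F"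
  unfolding hc_def by (auto simp: less_Suc_eq insert_commute)

lemma cyc4: "distinct [a,b,c,d] \<Longrightarrow> {a,b,c,d} \<subseteq> V \<Longrightarrow> {a,b} \<in> F \<Longrightarrow> {b,c} \<in> F \<Longrightarrow> {c,d} \<in> F
  \<Longrightarrow> {d,a} \<in> F \<Longrightarrow> cyc V F [a,b,c,d]"
  unfolding cyc_def by (auto simp: less_Suc_eq)

lemma E_M:
  assumes gI: "graph I EG" and gM: "\<forall>j\<in>I. graph (Vs j) (Es j)"
    and dj: "\<forall>j\<in>I. \<forall>l\<in>I. j \<noteq> l \<longrightarrow> Vs j \<inter> Vs l = {}"
    and i: "i \<in> I" and e: "e \<in> expand_E I EG Vs Es" and eM: "e \<subseteq> Vs i"
  shows "e \<in> Es i"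
proof -
  from e consider (a) j where "j \<in> I" "e \<in> Es j"
    | (b) a b j l where "e = {a,b}" "j \<in> I" "l \<in> I" "a \<in> Vs j" "b \<in> Vs l" "{j,l} \<in> EG"
    unfolding expand_E_def by blast
  then show ?thesis
  proof cases
    case (a j)
    have c2: "card e = 2" "e \<subseteq> Vs j" using gM a unfolding graph_def by auto
    show ?thesis
    proof (cases "j = i")
      case True then show ?thesis using a by simp
    next
      case False
      hence "e = {}" using dj a(1) i c2(2) eM by blast
      thus ?thesis using c2 by simp
    qed
  next
    case (b a b j l)
    have "j = i" using b dj i eM by blast
    moreover have "l = i" using b dj i eM by blast
    ultimately have "{i} \<in> EG" using b by simp
    thus ?thesis using gI unfolding graph_def by fastforce
  qed
qed

lemma E3:
  assumes dj: "\<forall>j\<in>I. \<forall>l\<in>I. j \<noteq> l \<longrightarrow> Vs j \<inter> Vs l = {}"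
    and gM: "\<forall>j\<in>I. graph (Vs j) (Es j)"
    and i: "i \<in> I" and m: "m \<in> Vs i"
    and n: "n \<in> nbhd (expand_V I Vs) (expand_E I EG Vs Es) (Vs i)"
  shows "{m,n} \<in> expand_E I EG Vs Es"
proof -
  obtain x where x: "x \<in> Vs i" "{x,n} \<in> expand_E I EG Vs Es" "n \<notin> Vs i" "n \<in> expand_V I Vs"
    using n unfolding nbhd_def by blast
  from x(2) consider (a) j where "j \<in> I" "{x,n} \<in> Es j"
    | (b) a b j l where "{x,n} = {a,b}" "j \<in> I" "l \<in> I" "a \<in> Vs j" "b \<in> Vs l" "{j,l} \<in> EG"
    unfolding expand_E_def by blast
  then show ?thesis
  proof cases
    case (a j)
    hence "{x,n} \<subseteq> Vs j" using gM unfolding graph_def by blast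
    hence "j = i" using dj a(1) i x(1) by blast
    thus ?thesis using a \<open>{x,n} \<subseteq> Vs j\<close> x(3) by simp
  next
    case (b a b j l)
    show ?thesis
    proof (cases "x = a \<and> n = b")
      case True
      hence "j = i" using b dj i x(1) by blast
      thus ?thesis unfolding expand_E_def using b True m i by blast
    next
      case False
      hence "x = b" "n = a" using b(1) by (auto simp: doubleton_eq_iff)
      hence "l = i" using b dj i x(1) by blast
      hence "{n,m} \<in> expand_E I EG Vs Es" unfolding expand_E_def using b \<open>n = a\<close> m i by blast
      thus ?thesis by (simp add: insert_commute)
    qed
  qed
qed

lemma card2_obtain: "card e = 2 \<Longrightarrow> (\<And>x y. e = {x,y} \<Longrightarrow> x \<noteq> y \<Longrightarrow> P) \<Longrightarrow> P"
  by (metis card_2_iff)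

theorem lemma7:
  fixes I :: "'i set" and EG :: "'i set set"
    and Vs :: "'i \<Rightarrow> 'a set" and Es :: "'i \<Rightarrow> 'a set set"
    and \<Omega> :: "'a set" and i :: 'i
  assumes "graph I EG"
    and "\<forall>j\<in>I. graph (Vs j) (Es j)"
    and "\<forall>j\<in>I. \<forall>l\<in>I. j \<noteq> l \<longrightarrow> Vs j \<inter> Vs l = {}"
    and "potential_maximal_clique (expand_V I Vs) (expand_E I EG Vs Es) \<Omega>"
    and "i \<in> I"
    and "\<Omega> \<inter> Vs i \<noteq> {}"
    and "\<not> Vs i \<subseteq> \<Omega>"
  shows "potential_maximal_clique (Vs i) (Es i) (\<Omega> \<inter> Vs i) \<and>
         \<Omega> - Vs i = nbhd (expand_V I Vs) (expand_E I EG Vs Es) (Vs i)"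
proof -
  note gI = assms(1) and gM = assms(2) and dj = assms(3) and pmc = assms(4) and iI = assms(5)
  define V where "V = expand_V I Vs"
  define E where "E = expand_E I EG Vs Es"
  define M where "M = Vs i"
  define N where "N = nbhd V E M"
  define X where "X = V - M"
  have MV: "M \<subseteq> V" using iI unfolding M_def V_def expand_V_def by blast
  have XM: "X \<union> M = V" using MV unfolding X_def by blast
  have disj: "X \<inter> M = {}" unfolding X_def by blast
  have NX: "N \<subseteq> X" unfolding N_def nbhd_def X_def by blast
  have NMd: "\<And>x. x \<in> N \<Longrightarrow> x \<notin> M" using NX disj by blast
  have finM: "finite M" using gM iI unfolding M_def graph_def by blast
  have EsM: "\<forall>e\<in>Es i. e \<subseteq> M" using gM iI unfolding M_def graph_def by blast
  have EsE: "Es i \<subseteq> E" using iI unfolding E_def expand_E_def by blast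
  have EM: "e \<in> Es i" if "e \<in> E" "e \<subseteq> M" for e
    using E_M[OF gI gM dj iI] that unfolding E_def M_def by blast
  have E3': "{m,n} \<in> E" if "m \<in> M" "n \<in> N" for m n
    using E3[OF dj gM iI] that unfolding E_def M_def N_def V_def by blast
  have E2: "y \<in> N" if "{x,y} \<in> E" "x \<in> M" "y \<in> X" for x y
    using that unfolding N_def nbhd_def X_def by blast
  obtain F where mt: "minimal_triangulation V E F" and mc: "maximal_clique V F \<Omega>"
    using pmc unfolding potential_maximal_clique_def V_def E_def by blast
  have gF: "graph V F" and EF: "E \<subseteq> F" and chF: "chordal V F"
    and minF: "\<And>F'. E \<subseteq> F' \<Longrightarrow> F' \<subset> F \<Longrightarrow> \<not> chordal V F'"
    using mt unfolding minimal_triangulation_def by blast+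
  have Fe: "e \<subseteq> V" "card e = 2" if "e \<in> F" for e using gF that unfolding graph_def by blast+
  have clO: "clique V F \<Omega>" and maxO: "\<And>K'. clique V F K' \<Longrightarrow> \<Omega> \<subseteq> K' \<Longrightarrow> K' = \<Omega>"
    using mc unfolding maximal_clique_def by blast+
  have OV: "\<Omega> \<subseteq> V" and Oe: "\<And>x y. x \<in> \<Omega> \<Longrightarrow> y \<in> \<Omega> \<Longrightarrow> x \<noteq> y \<Longrightarrow> {x,y} \<in> F"
    using clO unfolding clique_def by blast+
  obtain m0 where m0: "m0 \<in> \<Omega>" "m0 \<in> M" using assms(6) unfolding M_def by blast
  obtain m1 where m1: "m1 \<in> M" "m1 \<notin> \<Omega>" using assms(7) unfolding M_def by blast
  define A where "A = {e\<in>F. e \<subseteq> X}"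
  define B where "B = {e\<in>F. e \<subseteq> M}"
  have Ae: "\<forall>e\<in>A. e \<subseteq> X" and Be: "\<forall>e\<in>B. e \<subseteq> M" unfolding A_def B_def by blast+
  have BF: "B \<subseteq> F" unfolding B_def by blast
  have EsB: "Es i \<subseteq> B" using EsM EsE EF unfolding B_def by blast
  have chA: "chordal X A" unfolding A_def using chordal_induced[OF chF] X_def by blast
  have chB: "chordal M B" unfolding B_def using chordal_induced[OF chF MV] .
  show ?thesis
  proof (cases "\<exists>a\<in>M. \<exists>b\<in>M. a \<noteq> b \<and> {a,b} \<notin> F")
    case True
    then obtain a b where ab: "a \<in> M" "b \<in> M" "a \<noteq> b" "{a,b} \<notin> F" by blast
    have NclF: "{x,y} \<in> F" if xy: "x \<in> N" "y \<in> N" "x \<noteq> y" for x y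
    proof -
      have "x \<notin> M" "y \<notin> M" using xy NX disj by blast+
      hence "distinct [a,x,b,y]" using ab xy by auto
      moreover have "{a,x,b,y} \<subseteq> V" using ab xy MV NX X_def by blast
      moreover have "{a,x} \<in> F" "{x,b} \<in> F" "{b,y} \<in> F" "{y,a} \<in> F"
        using E3'[of a x] E3'[of b x] E3'[of b y] E3'[of a y] ab xy EF by (auto simp: insert_commute)
      ultimately have "cyc V F [a,x,b,y]" by (intro cyc4)
      hence "hc F [a,x,b,y]" using chF unfolding chordal_iff by blast
      from hc4[OF this] ab(4) show ?thesis by blast
    qed
    have Ncl: "\<forall>x\<in>N. \<forall>y\<in>N. x \<noteq> y \<longrightarrow> {x,y} \<in> A"
    proof (intro ballI impI)
      fix x y assume "x \<in> N" "y \<in> N" "x \<noteq> y"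
      hence "{x,y} \<in> F" "{x,y} \<subseteq> X" using NclF NX by blast+
      thus "{x,y} \<in> A" unfolding A_def by blast
    qed
    have MNF: "{m,n} \<in> F" if "m \<in> M" "n \<in> N" for m n using E3' that EF by blast
    have MNF': "{n,m} \<in> F" if "m \<in> M" "n \<in> N" for m n using MNF[OF that] by (simp add: insert_commute)
    have glueF: "glue A B' M N \<subseteq> F" if "B' \<subseteq> F" for B'
      unfolding glue_def using that MNF by (auto simp: A_def)
    have Eglue: "E \<subseteq> glue A B' M N" if "Es i \<subseteq> B'" for B'
    proof
      fix e assume e: "e \<in> E"
      have eV: "e \<subseteq> V" "card e = 2" using Fe e EF by blast+
      obtain x y where xy: "e = {x,y}" "x \<noteq> y" using eV(2) by (rule card2_obtain)
      show "e \<in> glue A B' M N"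
      proof (cases "x \<in> M")
        case xM: True
        show ?thesis
        proof (cases "y \<in> M")
          case True
          hence "e \<in> Es i" using EM e xM xy by blast
          hence "e \<in> B'" using that by blast
          thus ?thesis by (rule subsetD[OF glue_B])
        next
          case False
          hence "y \<in> X" using eV xy X_def by blast
          hence "y \<in> N" using E2 e xy xM by blast
          thus ?thesis using xM xy by (simp add: glue_MN)
        qed
      next
        case xX: False
        hence xX: "x \<in> X" using eV xy X_def by blast
        show ?thesis
        proof (cases "y \<in> M")
          case True
          hence "x \<in> N" using E2[of y x] e xy xX by (simp add: insert_commute)
          hence "{y,x} \<in> glue A B' M N" using True by (simp add: glue_MN)
          thus ?thesis using xy by (simp add: insert_commute)
        next
          case False
          hence "y \<in> X" using eV xy X_def by blast
          hence "e \<in> A" using xX xy e EF unfolding A_def by blast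
          thus ?thesis by (rule subsetD[OF glue_A])
        qed
      qed
    qed
    have chG: "chordal V (glue A B' M N)" if "chordal M B'" "\<forall>e\<in>B'. e \<subseteq> M" for B'
      using glue_nc[OF chA that(1) disj Ae that(2) NX Ncl] XM by simp
    have GF: "glue A B M N = F"
    proof (rule ccontr)
      assume "glue A B M N \<noteq> F"
      hence "glue A B M N \<subset> F" using glueF[OF BF] by (rule psubsetI[rotated])
      moreover have "E \<subseteq> glue A B M N" using EsB by (rule Eglue)
      ultimately show False using minF chG[OF chB Be] by blast
    qed
    have OmN: "\<Omega> - M \<subseteq> N"
    proof
      fix x assume x: "x \<in> \<Omega> - M"
      hence "{m0,x} \<in> F" using Oe m0 by blast
      hence "{m0,x} \<in> glue A B M N" using GF by simp
      thus "x \<in> N" using clsN[OF _ m0(2) _ disj Ae Be] x by blast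
    qed
    have NO: "N \<subseteq> \<Omega>"
    proof -
      have "clique V F (\<Omega> \<union> N)" unfolding clique_def
      proof (intro conjI ballI impI)
        show "\<Omega> \<union> N \<subseteq> V" using OV NX X_def by blast
        fix x y assume xy: "x \<in> \<Omega> \<union> N" "y \<in> \<Omega> \<union> N" "x \<noteq> y"
        have xN: "x \<in> M \<or> x \<in> N" if "x \<in> \<Omega> \<union> N" for x using OmN that by blast
        show "{x,y} \<in> F"
        proof (cases "x \<in> \<Omega> \<and> y \<in> \<Omega>")
          case True thus ?thesis using Oe xy by blast
        next
          case False
          hence "x \<in> N \<or> y \<in> N" using xy by blast
          moreover have "x \<in> M \<or> x \<in> N" "y \<in> M \<or> y \<in> N" using xN xy by blast+
          ultimately show ?thesis using NclF MNF MNF' xy NMd by blast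
        qed
      qed
      hence "\<Omega> \<union> N = \<Omega>" using maxO by blast
      thus ?thesis by blast
    qed
    have part2: "\<Omega> - M = N" using OmN NO NX disj by blast
    have mtB: "minimal_triangulation M (Es i) B"
      unfolding minimal_triangulation_def
    proof (intro conjI allI impI)
      show "graph M B" unfolding graph_def using finM Fe Be unfolding B_def by blast
      show "Es i \<subseteq> B" using EsM EsE EF unfolding B_def by blast
      show "chordal M B" by (rule chB)
      fix F' assume F': "Es i \<subseteq> F' \<and> F' \<subset> B"
      show "\<not> chordal M F'"
      proof
        assume chF': "chordal M F'"
        have F'M: "\<forall>e\<in>F'. e \<subseteq> M" using F' Be by blast
        have "E \<subseteq> glue A F' M N" using Eglue F' by blast
        moreover have "glue A F' M N \<subset> F"
        proof -
          have sub: "glue A F' M N \<subseteq> F" using glueF[of F'] F' unfolding B_def by blast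
          obtain e where e: "e \<in> B" "e \<notin> F'" using F' by blast
          have "e \<in> F" "e \<subseteq> M" "card e = 2" using e Fe unfolding B_def by blast+
          then obtain x y where xy: "e = {x,y}" by (metis card_2_iff)
          have "e \<notin> glue A F' M N"
          proof
            assume "e \<in> glue A F' M N"
            hence "{x,y} \<in> F'" using clsB[of x y A F' M N X] xy \<open>e \<subseteq> M\<close> disj Ae NX by blast
            thus False using e xy by simp
          qed
          thus ?thesis using sub \<open>e \<in> F\<close> by blast
        qed
        ultimately show False using minF chG[OF chF' F'M] by blast
      qed
    qed
    have mcB: "maximal_clique M B (\<Omega> \<inter> M)" unfolding maximal_clique_def
    proof (intro conjI allI impI)
      show "clique M B (\<Omega> \<inter> M)" unfolding clique_def B_def using Oe by auto
      fix K' assume K': "clique M B K' \<and> \<Omega> \<inter> M \<subseteq> K'"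
      have K'M: "K' \<subseteq> M" and K'e: "\<And>x y. x \<in> K' \<Longrightarrow> y \<in> K' \<Longrightarrow> x \<noteq> y \<Longrightarrow> {x,y} \<in> F"
        using K' unfolding clique_def B_def by blast+
      have "clique V F (K' \<union> N)" unfolding clique_def
      proof (intro conjI ballI impI)
        show "K' \<union> N \<subseteq> V" using K'M MV NX X_def by blast
        fix x y assume xy: "x \<in> K' \<union> N" "y \<in> K' \<union> N" "x \<noteq> y"
        show "{x,y} \<in> F" using xy K'e NclF MNF MNF' K'M NMd by blast
      qed
      moreover have "\<Omega> \<subseteq> K' \<union> N" using K' part2 by blast
      ultimately have "K' \<union> N = \<Omega>" using maxO by blast
      thus "K' = \<Omega> \<inter> M" using K' K'M NX disj by blast
    qed
    have "potential_maximal_clique M (Es i) (\<Omega> \<inter> M)"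
      unfolding potential_maximal_clique_def using mtB mcB by blast
    thus ?thesis using part2 unfolding M_def N_def V_def E_def by simp
  next
    case False
    hence Mcl: "\<forall>x\<in>M. \<forall>y\<in>M. x \<noteq> y \<longrightarrow> {x,y} \<in> F" by blast
    define T where "T = {x\<in>V-M. \<forall>m\<in>M. {m,x}\<in>F}"
    have AX: "A = {e\<in>F. e \<subseteq> V - M}" unfolding A_def X_def ..
    have chG: "chordal V (glue A B M T)"
      using glue_c[OF chF _ MV Mcl T_def] Fe unfolding AX B_def by blast
    have GF: "glue A B M T = F"
    proof (rule ccontr)
      assume "glue A B M T \<noteq> F"
      moreover have "glue A B M T \<subseteq> F" unfolding glue_def A_def B_def T_def by auto
      ultimately have "glue A B M T \<subset> F" by blast
      moreover have "E \<subseteq> glue A B M T"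
      proof
        fix e assume e: "e \<in> E"
        have eV: "e \<subseteq> V" "card e = 2" using Fe e EF by blast+
        obtain x y where xy: "e = {x,y}" "x \<noteq> y" using eV(2) by (rule card2_obtain)
        have inT: "y \<in> T" if "{x,y} \<in> E" "x \<in> M" "y \<in> X" for x y
        proof -
          have "y \<in> N" using E2 that by blast
          thus ?thesis using E3' EF that X_def unfolding T_def by blast
        qed
        show "e \<in> glue A B M T"
        proof (cases "x \<in> M")
          case xM: True
          show ?thesis
          proof (cases "y \<in> M")
            case True
            hence "e \<in> B" using e xM xy EF unfolding B_def by blast
            thus ?thesis by (rule subsetD[OF glue_B])
          next
            case False
            hence "y \<in> X" using eV xy X_def by blast
            hence "y \<in> T" using inT e xy xM by blast
            thus ?thesis using xM xy by (simp add: glue_MN)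
          qed
        next
          case xX: False
          hence xX: "x \<in> X" using eV xy X_def by blast
          show ?thesis
          proof (cases "y \<in> M")
            case True
            hence "x \<in> T" using inT[of y x] e xy xX by (simp add: insert_commute)
            hence "{y,x} \<in> glue A B M T" using True by (simp add: glue_MN)
            thus ?thesis using xy by (simp add: insert_commute)
          next
            case False
            hence "y \<in> X" using eV xy X_def by blast
            hence "e \<in> A" using xX xy e EF unfolding A_def by blast
            thus ?thesis by (rule subsetD[OF glue_A])
          qed
        qed
      qed
      ultimately show False using minF chG by blast
    qed
    have "clique V F (insert m1 \<Omega>)" unfolding clique_def
    proof (intro conjI ballI impI)
      show "insert m1 \<Omega> \<subseteq> V" using OV MV m1 by blast
      have m1x: "{m1,x} \<in> F" if "x \<in> \<Omega>" for x
      proof (cases "x \<in> M")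
        case True
        moreover have "m1 \<noteq> x" using that m1 by blast
        ultimately show ?thesis using Mcl m1 by blast
      next
        case False
        hence "{m0,x} \<in> F" using Oe m0 that by blast
        hence "{m0,x} \<in> glue A B M T" using GF by simp
        hence "x \<in> T" using clsN[OF _ m0(2) False disj Ae Be] by blast
        thus ?thesis using m1 unfolding T_def by blast
      qed
      fix x y assume xy: "x \<in> insert m1 \<Omega>" "y \<in> insert m1 \<Omega>" "x \<noteq> y"
      have m1x': "{x,m1} \<in> F" if "x \<in> \<Omega>" for x using m1x[OF that] by (simp add: insert_commute)
      show "{x,y} \<in> F" using xy Oe m1x m1x' by blast
    qed
    hence "insert m1 \<Omega> = \<Omega>" using maxO by blast
    thus ?thesis using m1 by blast
  qed
qed

end
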